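(* Let $u^1:S\times B\to\mathbb{R}$ and let $y:S\to\Delta(B)$ satisfy $U^1(\mu_0,y)\ge U^1(\mu,y)$ for every $\mu\in\mathcal{M}$. Then every neighborhood of $y$ in $\mathbb{R}^{S\times B}$ contains a one-to-one map $\tilde y:S\to\Delta(B)$ such that $U^1(\mu_0,\tilde y)\ge U^1(\mu,\tilde y)$ for every $\mu\in\mathcal{M}$.
   Context: $S$ and $B$ are finite sets; messages are identified with states. $m\in\Delta(S)$ has full support. $\mathcal{M}$ is the set of probability distributions on $S\times S$ both of whose marginals equal $m$; $\mu_0(s,s)=m(s)$, $\mu_0(s,t)=0$ for $s\ne t$. With $u^1$ extended linearly to mixed actions, $U^1(\mu,y)=\sum_{s,a\in S}\mu(s,a)u^1(s,y(\cdot\mid a))$. *)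

theory Defs
  imports "HOL-Analysis.Analysis"
begin

definition is_dist :: "('a::finite \<Rightarrow> real) \<Rightarrow> bool" where
  "is_dist p \<longleftrightarrow> (\<forall>x. 0 \<le> p x) \<and> (\<Sum>x\<in>UNIV. p x) = 1"

definition couplings :: "('s::finite \<Rightarrow> real) \<Rightarrow> ('s \<times> 's \<Rightarrow> real) set" where
  "couplings m = {\<mu>. is_dist \<mu> \<and>
      (\<forall>s. (\<Sum>a\<in>UNIV. \<mu> (s, a)) = m s) \<and>
      (\<forall>a. (\<Sum>s\<in>UNIV. \<mu> (s, a)) = m a)}"

definition mu0 :: "('s \<Rightarrow> real) \<Rightarrow> ('s \<times> 's \<Rightarrow> real)" where
  "mu0 m = (\<lambda>(s, t). if s = t then m s else 0)"

definition u_mixed :: "('s \<Rightarrow> 'b::finite \<Rightarrow> real) \<Rightarrow> 's \<Rightarrow> ('b \<Rightarrow> real) \<Rightarrow> real" where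
  "u_mixed u s q = (\<Sum>b\<in>UNIV. q b * u s b)"

definition U1 :: "('s::finite \<Rightarrow> 'b::finite \<Rightarrow> real) \<Rightarrow> ('s \<times> 's \<Rightarrow> real) \<Rightarrow> ('s \<Rightarrow> 'b \<Rightarrow> real) \<Rightarrow> real" where
  "U1 u \<mu> y = (\<Sum>s\<in>UNIV. \<Sum>a\<in>UNIV. \<mu> (s, a) * u_mixed u s (y a))"

end

theory Submission
  imports Defs
begin

lemma valid_of_potential:
  fixes m :: "'s::finite \<Rightarrow> real" and u :: "'s \<Rightarrow> 'b::finite \<Rightarrow> real"
  assumes le: "\<And>s a. u_mixed u s (z a) \<le> \<phi> s + \<psi> a"
    and eq: "\<And>s. u_mixed u s (z s) = \<phi> s + \<psi> s"
    and mu: "\<mu> \<in> couplings m"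
  shows "U1 u \<mu> z \<le> U1 u (mu0 m) z"
proof -
  have nn: "\<And>x. 0 \<le> \<mu> x" and r: "\<And>s. (\<Sum>a\<in>UNIV. \<mu> (s, a)) = m s"
    and c: "\<And>a. (\<Sum>s\<in>UNIV. \<mu> (s, a)) = m a"
    using mu by (auto simp: couplings_def is_dist_def)
  have "U1 u \<mu> z \<le> (\<Sum>s\<in>UNIV. \<Sum>a\<in>UNIV. \<mu> (s, a) * (\<phi> s + \<psi> a))"
    unfolding U1_def by (intro sum_mono mult_left_mono le nn)
  also have "\<dots> = (\<Sum>s\<in>UNIV. \<phi> s * (\<Sum>a\<in>UNIV. \<mu> (s, a))) + (\<Sum>a\<in>UNIV. \<psi> a * (\<Sum>s\<in>UNIV. \<mu> (s, a)))"
  proof -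
    have "(\<Sum>s\<in>UNIV. \<Sum>a\<in>UNIV. \<mu> (s, a) * (\<phi> s + \<psi> a)) =
        (\<Sum>s\<in>UNIV. \<Sum>a\<in>UNIV. \<phi> s * \<mu> (s, a)) + (\<Sum>s\<in>UNIV. \<Sum>a\<in>UNIV. \<psi> a * \<mu> (s, a))"
      by (simp only: distrib_left sum.distrib mult.commute)
    also have "(\<Sum>s\<in>UNIV. \<Sum>a\<in>UNIV. \<psi> a * \<mu> (s, a)) = (\<Sum>a\<in>UNIV. \<Sum>s\<in>UNIV. \<psi> a * \<mu> (s, a))"
      by (rule sum.swap)
    finally show ?thesis by (simp only: sum_distrib_left)
  qed
  also have "\<dots> = (\<Sum>s\<in>UNIV. m s * (\<phi> s + \<psi> s))"
    by (simp add: r c algebra_simps sum.distrib)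
  also have "\<dots> = U1 u (mu0 m) z"
  proof -
    have "(\<Sum>a\<in>UNIV. mu0 m (s, a) * u_mixed u s (z a)) = m s * (\<phi> s + \<psi> s)" for s
    proof -
      have "(\<Sum>a\<in>UNIV. mu0 m (s, a) * u_mixed u s (z a)) = (\<Sum>a\<in>UNIV. if s = a then m s * u_mixed u s (z s) else 0)"
        by (rule sum.cong) (auto simp: mu0_def)
      also have "\<dots> = m s * u_mixed u s (z s)" by simp
      finally show ?thesis by (simp add: eq)
    qed
    thus ?thesis unfolding U1_def by simp
  qed
  finally show ?thesis .
qed

lemma u_mixed_comb:
  "u_mixed u s (\<lambda>b. (1 - e) * p b + e * q b) = (1 - e) * u_mixed u s p + e * u_mixed u s q"
proof -
  have "u_mixed u s (\<lambda>b. (1 - e) * p b + e * q b) = (\<Sum>b\<in>UNIV. (1 - e) * (p b * u s b) + e * (q b * u s b))"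
    unfolding u_mixed_def by (rule sum.cong) (auto simp: algebra_simps)
  also have "\<dots> = (1 - e) * u_mixed u s p + e * u_mixed u s q"
    unfolding u_mixed_def by (simp only: sum.distrib sum_distrib_left[symmetric])
  finally show ?thesis .
qed

lemma U1_comb:
  "U1 u \<mu> (\<lambda>a b. (1 - e) * y a b + e * z a b) = (1 - e) * U1 u \<mu> y + e * U1 u \<mu> z"
proof -
  have "U1 u \<mu> (\<lambda>a b. (1 - e) * y a b + e * z a b) =
     (\<Sum>s\<in>UNIV. \<Sum>a\<in>UNIV. (1 - e) * (\<mu> (s, a) * u_mixed u s (y a)) + e * (\<mu> (s, a) * u_mixed u s (z a)))"
    unfolding U1_def u_mixed_comb by (intro sum.cong refl) (simp add: algebra_simps)
  also have "\<dots> = (1 - e) * U1 u \<mu> y + e * U1 u \<mu> z"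
    unfolding U1_def by (simp only: sum.distrib sum_distrib_left[symmetric])
  finally show ?thesis .
qed

lemma exists_inj_valid:
  fixes u :: "'s::finite \<Rightarrow> 'b::finite \<Rightarrow> real"
  assumes b12: "b1 \<noteq> (b2::'b)"
  shows "\<exists>z::'s \<Rightarrow> 'b \<Rightarrow> real. inj z \<and> (\<forall>s. is_dist (z s)) \<and> (\<exists>\<phi> \<psi>. (\<forall>s a. u_mixed u s (z a) \<le> \<phi> s + \<psi> a) \<and> (\<forall>s. u_mixed u s (z s) = \<phi> s + \<psi> s))"
proof -
  obtain \<iota>0 :: "'s \<Rightarrow> nat" and k where "inj_on \<iota>0 UNIV"
    using finite_imp_inj_to_nat_seg[of "UNIV::'s set"] by auto
  hence inj0: "inj \<iota>0" by simp
  define \<iota> where "\<iota> a = real (\<iota>0 a)" for a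
  have iota_inj: "\<iota> s = \<iota> t \<Longrightarrow> s = t" for s t
    using inj0 unfolding \<iota>_def by (simp add: inj_eq)
  define n where "n = real CARD('b)"
  have npos: "n > 0" unfolding n_def by simp
  define ub where "ub s = (\<Sum>b\<in>UNIV. u s b) / n" for s
  define v where "v s b = u s b - ub s" for s b
  define e where "e b = (if b = b1 then 1 else 0) - (if b = b2 then 1 else (0::real))" for b
  define E where "E s = v s b1 - v s b2" for s
  define D where "D s a = (\<Sum>b\<in>UNIV. (v s b - v a b)^2)" for s a
  have ev1: "eventually (\<lambda>\<eta>. \<eta> * \<iota> a * (E s - E a) \<le> D s a / 2) (at_right 0)" for s a
  proof (cases "D s a = 0")
    case True
    hence "\<forall>b. (v s b - v a b)^2 = 0" unfolding D_def
      by (subst (asm) sum_nonneg_eq_0_iff) auto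
    hence "E s = E a" unfolding E_def by auto
    thus ?thesis using True by simp
  next
    case False
    have "D s a \<ge> 0" unfolding D_def by (intro sum_nonneg) auto
    with False have Dp: "D s a / 2 > 0" by simp
    have "((\<lambda>\<eta>. \<eta> * \<iota> a * (E s - E a)) \<longlongrightarrow> 0 * \<iota> a * (E s - E a)) (at_right 0)"
      by (intro tendsto_intros)
    hence "((\<lambda>\<eta>. \<eta> * \<iota> a * (E s - E a)) \<longlongrightarrow> 0) (at_right 0)" by simp
    from order_tendstoD(2)[OF this Dp] show ?thesis
      by (rule eventually_mono) simp
  qed
  have ev2: "eventually (\<lambda>\<eta>. s \<noteq> t \<longrightarrow> (\<lambda>b. v s b + \<eta> * \<iota> s * e b) \<noteq> (\<lambda>b. v t b + \<eta> * \<iota> t * e b)) (at_right 0)" for s t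
  proof (cases "v s = v t")
    case True
    have "eventually (\<lambda>\<eta>::real. \<eta> > 0) (at_right 0)"
      by (simp add: eventually_at_right_less)
    thus ?thesis
    proof (rule eventually_mono, intro impI notI)
      fix \<eta> :: real assume "\<eta> > 0" "s \<noteq> t" and eq: "(\<lambda>b. v s b + \<eta> * \<iota> s * e b) = (\<lambda>b. v t b + \<eta> * \<iota> t * e b)"
      from fun_cong[OF eq, of b1] True have "\<eta> * \<iota> s = \<eta> * \<iota> t"
        using b12 by (simp add: e_def)
      with \<open>\<eta> > 0\<close> have "\<iota> s = \<iota> t" by simp
      with iota_inj \<open>s \<noteq> t\<close> show False by blast
    qed
  next
    case False
    then obtain b where b: "v s b \<noteq> v t b" by auto
    have "((\<lambda>\<eta>. (v s b + \<eta> * \<iota> s * e b) - (v t b + \<eta> * \<iota> t * e b)) \<longlongrightarrow>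
        (v s b + 0 * \<iota> s * e b) - (v t b + 0 * \<iota> t * e b)) (at_right 0)"
      by (intro tendsto_intros)
    hence "eventually (\<lambda>\<eta>. (v s b + \<eta> * \<iota> s * e b) - (v t b + \<eta> * \<iota> t * e b) \<noteq> 0) (at_right 0)"
      using b by (intro tendsto_imp_eventually_ne) auto
    thus ?thesis by (rule eventually_mono) (auto dest: fun_cong[of _ _ b])
  qed
  have "eventually (\<lambda>\<eta>::real. \<eta> > 0 \<and> (\<forall>s a. \<eta> * \<iota> a * (E s - E a) \<le> D s a / 2) \<and>
      (\<forall>s t. s \<noteq> t \<longrightarrow> (\<lambda>b. v s b + \<eta> * \<iota> s * e b) \<noteq> (\<lambda>b. v t b + \<eta> * \<iota> t * e b))) (at_right 0)"
    using ev1 ev2 eventually_at_right_less[of "0::real"] by (intro eventually_conj eventually_all_finite) auto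
  from eventually_happens'[OF trivial_limit_at_right_real this]
  obtain \<eta> :: real where etap: "\<eta> > 0" and P1: "\<And>s a. \<eta> * \<iota> a * (E s - E a) \<le> D s a / 2"
    and P2: "\<And>s t. s \<noteq> t \<Longrightarrow> (\<lambda>b. v s b + \<eta> * \<iota> s * e b) \<noteq> (\<lambda>b. v t b + \<eta> * \<iota> t * e b)"
    by blast
  define w where "w a b = v a b + \<eta> * \<iota> a * e b" for a b
  have sum_ind: "(\<Sum>b\<in>UNIV. (if b = c then f b else 0)) = f c" for c :: 'b and f :: "'b \<Rightarrow> real"
    by (simp add: sum.delta)
  have sumv: "(\<Sum>b\<in>UNIV. v a b) = 0" for a
    using npos by (simp add: v_def ub_def sum_subtractf n_def)
  have sume: "(\<Sum>b\<in>UNIV. e b) = 0"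
    unfolding e_def by (simp add: sum_subtractf)
  have sumw: "(\<Sum>b\<in>UNIV. w a b) = 0" for a
    unfolding w_def by (simp add: sum.distrib sumv sum_distrib_left[symmetric] sume)
  have sumev: "(\<Sum>b\<in>UNIV. e b * f b) = f b1 - f b2" for f :: "'b \<Rightarrow> real"
  proof -
    have "(\<Sum>b\<in>UNIV. e b * f b) = (\<Sum>b\<in>UNIV. (if b = b1 then f b else 0) - (if b = b2 then f b else 0))"
      by (intro sum.cong) (auto simp: e_def)
    also have "\<dots> = f b1 - f b2" by (simp only: sum_subtractf sum_ind)
    finally show ?thesis .
  qed
  define S where "S = (\<Sum>a\<in>UNIV. \<Sum>b\<in>UNIV. \<bar>w a b\<bar>)"
  have S0: "S \<ge> 0" unfolding S_def by (intro sum_nonneg) auto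
  have wS: "\<bar>w a b\<bar> \<le> S" for a b
  proof -
    have "\<bar>w a b\<bar> \<le> (\<Sum>b\<in>UNIV. \<bar>w a b\<bar>)" by (rule member_le_sum) auto
    also have "\<dots> \<le> S" unfolding S_def by (rule member_le_sum[where i=a]) (auto intro: sum_nonneg)
    finally show ?thesis .
  qed
  define c0 where "c0 = 1 / n"
  define \<delta> where "\<delta> = c0 / (1 + S)"
  have c0p: "c0 > 0" using npos by (simp add: c0_def)
  have dp: "\<delta> > 0" using c0p S0 by (simp add: \<delta>_def)
  define z where "z a b = c0 + \<delta> * w a b" for a b
  have dist: "is_dist (z a)" for a
  proof -
    have "\<delta> * \<bar>w a b\<bar> \<le> c0" for b
    proof -
      have "\<delta> * \<bar>w a b\<bar> \<le> \<delta> * S" using dp wS by (simp add: mult_left_mono)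
      also have "\<dots> = c0 * (S / (1 + S))" using S0 by (simp add: \<delta>_def)
      also have "\<dots> \<le> c0 * 1" using S0 c0p by (intro mult_left_mono) auto
      finally show ?thesis by simp
    qed
    hence "0 \<le> z a b" for b
      using dp unfolding z_def by (smt (verit) abs_ge_minus_self mult_minus_right mult_left_mono) 
    moreover have "(\<Sum>b\<in>UNIV. z a b) = 1"
      unfolding z_def using npos
      by (simp add: sum.distrib sum_distrib_left[symmetric] sumw c0_def n_def)
    ultimately show ?thesis unfolding is_dist_def by auto
  qed
  have injz: "inj z"
  proof (rule injI)
    fix s t assume "z s = z t"
    hence "z s b = z t b" for b by simp
    hence "w s b = w t b" for b using dp by (simp add: z_def)
    hence "(\<lambda>b. v s b + \<eta> * \<iota> s * e b) = (\<lambda>b. v t b + \<eta> * \<iota> t * e b)"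
      unfolding w_def by auto
    thus "s = t" using P2 by blast
  qed
  have key: "u_mixed u s (z a) = c0 * (\<Sum>b\<in>UNIV. u s b) + \<delta> * ((\<Sum>b\<in>UNIV. v a b * v s b) + \<eta> * \<iota> a * E s)" for s a
  proof -
    have "u_mixed u s (z a) = c0 * (\<Sum>b\<in>UNIV. u s b) + \<delta> * (\<Sum>b\<in>UNIV. w a b * u s b)"
      unfolding u_mixed_def z_def
      by (simp add: distrib_right sum.distrib sum_distrib_left mult.assoc)
    moreover have "(\<Sum>b\<in>UNIV. w a b * u s b) = (\<Sum>b\<in>UNIV. w a b * v s b) + ub s * (\<Sum>b\<in>UNIV. w a b)"
      by (simp add: v_def algebra_simps sum.distrib sum_distrib_left sum_subtractf)
    moreover have "(\<Sum>b\<in>UNIV. w a b * v s b) = (\<Sum>b\<in>UNIV. v a b * v s b) + \<eta> * \<iota> a * (\<Sum>b\<in>UNIV. e b * v s b)"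
      by (simp add: w_def distrib_right sum.distrib sum_distrib_left mult.assoc)
    ultimately show ?thesis by (simp add: sumw sumev E_def)
  qed
  define \<phi> where "\<phi> s = c0 * (\<Sum>b\<in>UNIV. u s b) + \<delta> * ((\<Sum>b\<in>UNIV. (v s b)^2) / 2)" for s
  define \<psi> where "\<psi> a = \<delta> * ((\<Sum>b\<in>UNIV. (v a b)^2) / 2 + \<eta> * \<iota> a * E a)" for a
  have Deq: "D s a / 2 = (\<Sum>b\<in>UNIV. (v s b)^2) / 2 + (\<Sum>b\<in>UNIV. (v a b)^2) / 2 - (\<Sum>b\<in>UNIV. v a b * v s b)" for s a
  proof -
    have "D s a = (\<Sum>b\<in>UNIV. ((v s b)^2 + (v a b)^2) - 2 * (v a b * v s b))"
      unfolding D_def by (rule sum.cong) (auto simp: power2_diff algebra_simps)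
    also have "\<dots> = (\<Sum>b\<in>UNIV. (v s b)^2) + (\<Sum>b\<in>UNIV. (v a b)^2) - 2 * (\<Sum>b\<in>UNIV. v a b * v s b)"
      by (simp only: sum_subtractf sum.distrib sum_distrib_left[symmetric])
    finally show ?thesis by simp
  qed
  have le: "u_mixed u s (z a) \<le> \<phi> s + \<psi> a" for s a
  proof -
    have "(\<Sum>b\<in>UNIV. v a b * v s b) + \<eta> * \<iota> a * E s \<le> (\<Sum>b\<in>UNIV. (v s b)^2) / 2 + ((\<Sum>b\<in>UNIV. (v a b)^2) / 2 + \<eta> * \<iota> a * E a)"
    proof -
      have "\<eta> * \<iota> a * (E s - E a) \<le> D s a / 2" by (rule P1)
      thus ?thesis using Deq[of s a] by (simp add: algebra_simps)
    qed
    hence "\<delta> * ((\<Sum>b\<in>UNIV. v a b * v s b) + \<eta> * \<iota> a * E s) \<le> \<delta> * ((\<Sum>b\<in>UNIV. (v s b)^2) / 2 + ((\<Sum>b\<in>UNIV. (v a b)^2) / 2 + \<eta> * \<iota> a * E a))"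
      using dp by (intro mult_left_mono) auto
    thus ?thesis unfolding key \<phi>_def \<psi>_def by (simp add: algebra_simps)
  qed
  have eq: "u_mixed u s (z s) = \<phi> s + \<psi> s" for s
    unfolding key \<phi>_def \<psi>_def by (simp add: algebra_simps power2_eq_square)
  show ?thesis using injz dist le eq by blast
qed


theorem lemma12:
  fixes m :: "'s::finite \<Rightarrow> real"
    and u :: "'s \<Rightarrow> 'b::finite \<Rightarrow> real"
    and y :: "'s \<Rightarrow> 'b \<Rightarrow> real"
  assumes nontriv: "CARD('s) > 1 \<longrightarrow> CARD('b) > 1"
    and m_dist: "is_dist m"
    and m_full: "\<forall>s. m s > 0"
    and y_dist: "\<forall>s. is_dist (y s)"
    and y_opt: "\<forall>\<mu>\<in>couplings m. U1 u (mu0 m) y \<ge> U1 u \<mu> y"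
  shows "\<forall>N. open N \<and> y \<in> N \<longrightarrow>
           (\<exists>y'\<in>N. inj y' \<and> (\<forall>s. is_dist (y' s)) \<and>
              (\<forall>\<mu>\<in>couplings m. U1 u (mu0 m) y' \<ge> U1 u \<mu> y'))"
proof (intro allI impI)
  fix N :: "('s \<Rightarrow> 'b \<Rightarrow> real) set" assume N: "open N \<and> y \<in> N"
  show "\<exists>y'\<in>N. inj y' \<and> (\<forall>s. is_dist (y' s)) \<and>
              (\<forall>\<mu>\<in>couplings m. U1 u (mu0 m) y' \<ge> U1 u \<mu> y')"
  proof (cases "CARD('s) > 1")
    case False
    hence "CARD('s) \<le> Suc 0" by simp
    hence "\<forall>a\<in>UNIV. \<forall>b\<in>(UNIV::'s set). a = b" by (subst (asm) card_le_Suc0_iff_eq) auto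
    hence "inj y" by (auto intro: injI)
    thus ?thesis using N y_dist y_opt by blast
  next
    case True
    with nontriv have "\<not> CARD('b) \<le> Suc 0" by simp
    then obtain b1 b2 :: 'b where b12: "b1 \<noteq> b2"
      by (subst (asm) card_le_Suc0_iff_eq) auto
    from exists_inj_valid[OF b12, of u] obtain z :: "'s \<Rightarrow> 'b \<Rightarrow> real" and \<phi> \<psi> where
      injz: "inj z" and zd: "\<forall>s. is_dist (z s)" and
      le: "\<forall>s a. u_mixed u s (z a) \<le> \<phi> s + \<psi> a" and eq: "\<forall>s. u_mixed u s (z s) = \<phi> s + \<psi> s"
      by blast
    have zopt: "U1 u \<mu> z \<le> U1 u (mu0 m) z" if "\<mu> \<in> couplings m" for \<mu>
      using le eq that by (intro valid_of_potential) auto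
    define F where "F = (\<lambda>(e::real). (\<lambda>a b. (1 - e) * y a b + e * z a b))"
    have "continuous_on UNIV F"
      unfolding F_def by (intro continuous_on_coordinatewise_then_product continuous_intros)
    hence "isCont F 0" by (simp add: continuous_on_eq_continuous_at)
    hence "(F \<longlongrightarrow> F 0) (at 0)" by (rule isContD)
    hence "(F \<longlongrightarrow> y) (at_right 0)" unfolding F_def
      by (auto intro: tendsto_within_subset)
    hence ev1: "eventually (\<lambda>e. F e \<in> N) (at_right 0)"
      using N by (intro topological_tendstoD) auto
    have ev2: "eventually (\<lambda>e::real. 0 < e \<and> e < 1) (at_right 0)"
      unfolding eventually_at_right_field by (intro exI[of _ 1]) auto
    have ev3: "eventually (\<lambda>e. s \<noteq> t \<longrightarrow> F e s \<noteq> F e t) (at_right 0)" for s t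
    proof (cases "y s = y t")
      case True
      show ?thesis using ev2
      proof (rule eventually_mono, intro impI notI)
        fix e :: real assume e: "0 < e \<and> e < 1" and st: "s \<noteq> t" and FF: "F e s = F e t"
        have "z s b = z t b" for b
        proof -
          have "F e s b = F e t b" using FF by simp
          hence "e * z s b = e * z t b" using True fun_cong[OF True, of b] unfolding F_def by simp
          thus ?thesis using e by simp
        qed
        hence "z s = z t" by auto
        with injz st show False by (auto dest: injD)
      qed
    next
      case False
      then obtain b where b: "y s b \<noteq> y t b" by auto
      have "((\<lambda>e. F e s b - F e t b) \<longlongrightarrow> ((1 - 0) * y s b + 0 * z s b) - ((1 - 0) * y t b + 0 * z t b)) (at_right 0)"
        unfolding F_def by (intro tendsto_intros)
      hence "eventually (\<lambda>e. F e s b - F e t b \<noteq> 0) (at_right 0)"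
        using b by (intro tendsto_imp_eventually_ne) auto
      thus ?thesis by (rule eventually_mono) auto
    qed
    have ev3': "eventually (\<lambda>e. \<forall>s t. s \<noteq> t \<longrightarrow> F e s \<noteq> F e t) (at_right 0)"
      by (intro eventually_all_finite) (rule ev3)
    have "eventually (\<lambda>e. F e \<in> N \<and> (0 < e \<and> e < 1) \<and> (\<forall>s t. s \<noteq> t \<longrightarrow> F e s \<noteq> F e t)) (at_right 0)"
      using eventually_conj[OF ev1 eventually_conj[OF ev2 ev3']] .
    from eventually_happens'[OF trivial_limit_at_right_real this]
    obtain e :: real where FN: "F e \<in> N" and e0: "0 < e" and e1: "e < 1"
      and Finj: "\<forall>s t. s \<noteq> t \<longrightarrow> F e s \<noteq> F e t" by blast
    have "inj (F e)" using Finj by (auto intro: injI)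
    moreover have "is_dist (F e s)" for s
    proof -
      have "0 \<le> F e s b" for b
        using y_dist zd e0 e1 unfolding F_def is_dist_def by (auto intro!: add_nonneg_nonneg mult_nonneg_nonneg)
      moreover have "(\<Sum>b\<in>UNIV. F e s b) = 1"
        using y_dist zd unfolding F_def is_dist_def
        by (simp add: sum.distrib sum_distrib_left[symmetric])
      ultimately show ?thesis unfolding is_dist_def by auto
    qed
    moreover have "U1 u \<mu> (F e) \<le> U1 u (mu0 m) (F e)" if "\<mu> \<in> couplings m" for \<mu>
    proof -
      have "U1 u \<mu> (F e) = (1 - e) * U1 u \<mu> y + e * U1 u \<mu> z" unfolding F_def by (rule U1_comb)
      also have "\<dots> \<le> (1 - e) * U1 u (mu0 m) y + e * U1 u (mu0 m) z"
        using y_opt that zopt[OF that] e0 e1 by (intro add_mono mult_left_mono) auto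
      also have "\<dots> = U1 u (mu0 m) (F e)" unfolding F_def by (rule U1_comb[symmetric])
      finally show ?thesis .
    qed
    ultimately show ?thesis using FN by blast
  qed
qed

end
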